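(* As formal power series in $y$, \[ \sum_{n\ge0}Q_n(x)y^n=\frac{2-y}{1-y-(x+1)y^2}+(1+x)y-1 . \]
   Context: For $n\ge1$ let $\Xi_n$ be the poset on $\{x_1,\dots,x_n\}$ whose cover relations are exactly: $x_2\prec x_1$, $x_3\prec x_2$, and for $3\le i\le n-1$, $x_i\prec x_{i+1}$ if $i$ is odd and $x_{i+1}\prec x_i$ if $i$ is even (so $x_1>x_2>x_3<x_4>x_5<\cdots$). A filter of a poset is an up-closed subset. The matchable Lucas cube $\Omega_n$ is the graph whose vertices are the filters of $\Xi_n$, two filters adjacent iff one is obtained from the other by deleting a single element; $\Omega_0$ is the one-vertex graph. $q_{n,k}$ denotes the number of induced subgraphs of $\Omega_n$ isomorphic to the $k$-dimensional hypercube, and $Q_n(x)=\sum_{k\ge0}q_{n,k}x^k$ is the cube polynomial of $\Omega_n$. *)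

theory Defs
  imports "HOL-Computational_Algebra.Formal_Power_Series"
begin

text \<open>Element x_i of the poset Xi_n is represented by the natural number i, 1 \<le> i \<le> n.
  xi_cover n a b means x_a is covered by x_b (x_a \<prec> x_b).\<close>
definition xi_cover :: "nat \<Rightarrow> nat \<Rightarrow> nat \<Rightarrow> bool" where
  "xi_cover n a b \<longleftrightarrow>
     ((a = 2 \<and> b = 1 \<and> 2 \<le> n) \<or>
      (a = 3 \<and> b = 2 \<and> 3 \<le> n) \<or>
      (\<exists>i. 3 \<le> i \<and> i \<le> n - 1 \<and> i + 1 \<le> n \<and>
          ((odd i \<and> a = i \<and> b = i + 1) \<or> (even i \<and> a = i + 1 \<and> b = i))))"

definition xi_le :: "nat \<Rightarrow> nat \<Rightarrow> nat \<Rightarrow> bool" where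
  "xi_le n = (xi_cover n)\<^sup>*\<^sup>*"

definition xi_filters :: "nat \<Rightarrow> nat set set" where
  "xi_filters n = {F. F \<subseteq> {1..n} \<and> (\<forall>a\<in>F. \<forall>b\<in>{1..n}. xi_le n a b \<longrightarrow> b \<in> F)}"

definition omega_adj :: "nat set \<Rightarrow> nat set \<Rightarrow> bool" where
  "omega_adj F G \<longleftrightarrow> (\<exists>z\<in>F. G = F - {z}) \<or> (\<exists>z\<in>G. F = G - {z})"

text \<open>An induced subgraph is determined by its vertex set S.\<close>
definition q :: "nat \<Rightarrow> nat \<Rightarrow> nat" where
  "q n k = card {S. S \<subseteq> xi_filters n \<and>
     (\<exists>f. bij_betw f (Pow {..<k}) S \<and>
          (\<forall>A\<in>Pow {..<k}. \<forall>B\<in>Pow {..<k}.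
              omega_adj (f A) (f B) \<longleftrightarrow> card ((A - B) \<union> (B - A)) = 1))}"

definition cube_poly_eval :: "nat \<Rightarrow> real \<Rightarrow> real" where
  "cube_poly_eval n x = (\<Sum>k | q n k \<noteq> 0. real (q n k) * x ^ k)"

end

theory Submission
  imports Defs
begin

definition sd :: "'a set \<Rightarrow> 'a set \<Rightarrow> 'a set" where
  "sd A B = (A - B) \<union> (B - A)"

lemma sd_one: "card (sd A B) = 1 \<longleftrightarrow> (\<exists>e. \<forall>z. (z \<in> A) = ((z \<in> B) \<noteq> (z = e)))"
proof
  assume "card (sd A B) = 1"
  then obtain e where "sd A B = {e}" by (auto simp: card_1_singleton_iff)
  then have h: "z \<in> (A - B) \<union> (B - A) \<longleftrightarrow> z = e" for z unfolding sd_def by simp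
  have "(z \<in> A) = ((z \<in> B) \<noteq> (z = e))" for z using h[of z] by auto
  then show "\<exists>e. \<forall>z. (z \<in> A) = ((z \<in> B) \<noteq> (z = e))" by blast
next
  assume "\<exists>e. \<forall>z. (z \<in> A) = ((z \<in> B) \<noteq> (z = e))"
  then obtain e where "\<forall>z. (z \<in> A) = ((z \<in> B) \<noteq> (z = e))" by blast
  then have "x \<in> sd A B \<longleftrightarrow> x = e" for x unfolding sd_def by auto
  then have "sd A B = {e}" by blast
  then show "card (sd A B) = 1" by simp
qed

lemma adj_iff: "omega_adj F G \<longleftrightarrow> card (sd F G) = 1"
proof
  assume a: "omega_adj F G"
  have "\<exists>z. sd F G = {z}"
  proof (cases "\<exists>z\<in>F. G = F - {z}")
    case True
    then obtain z where z: "z \<in> F" "G = F - {z}" by blast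
    have "w \<in> sd F G \<longleftrightarrow> w = z" for w using z unfolding sd_def by auto
    then show ?thesis by blast
  next
    case False
    then obtain z where z: "z \<in> G" "F = G - {z}" using a unfolding omega_adj_def by blast
    have "w \<in> sd F G \<longleftrightarrow> w = z" for w using z unfolding sd_def by auto
    then show ?thesis by blast
  qed
  then show "card (sd F G) = 1" by auto
next
  assume "card (sd F G) = 1"
  then obtain z where z: "\<forall>w. (w \<in> F) = ((w \<in> G) \<noteq> (w = z))" using sd_one[THEN iffD1] by blast
  show "omega_adj F G"
  proof (cases "z \<in> F")
    case True
    have "w \<in> G \<longleftrightarrow> w \<in> F - {z}" for w using z[rule_format, of w] True by auto
    then have "G = F - {z}" by blast
    then show ?thesis using True unfolding omega_adj_def by blast
  next
    case False
    have "w \<in> F \<longleftrightarrow> w \<in> G - {z}" for w using z[rule_format, of w] False by auto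
    then have "F = G - {z}" by blast
    moreover have "z \<in> G" using z False by auto
    ultimately show ?thesis unfolding omega_adj_def by blast
  qed
qed

lemma square_lemma:
  assumes "card (sd Y (sd X {p})) = 1" "card (sd Y (sd X {qq})) = 1" "p \<noteq> qq" "Y \<noteq> X"
  shows "Y = sd X {p, qq}"
proof -
  obtain e1 where e1: "\<forall>z. (z \<in> Y) = ((z \<in> sd X {p}) \<noteq> (z = e1))" using assms(1) sd_one[THEN iffD1] by blast
  obtain e2 where e2: "\<forall>z. (z \<in> Y) = ((z \<in> sd X {qq}) \<noteq> (z = e2))" using assms(2) sd_one[THEN iffD1] by blast
  have y1: "\<forall>z. (z \<in> Y) = (((z \<in> X) \<noteq> (z = p)) \<noteq> (z = e1))" using e1 unfolding sd_def by blast
  have y2: "\<forall>z. (z \<in> Y) = (((z \<in> X) \<noteq> (z = qq)) \<noteq> (z = e2))" using e2 unfolding sd_def by blast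
  have "e1 \<noteq> p"
  proof
    assume "e1 = p" then have "Y = X" using y1 by auto
    then show False using assms(4) by simp
  qed
  then have "e2 = p" using y1[rule_format, of p] y2[rule_format, of p] assms(3) by auto
  then have "e1 = qq" using y1[rule_format, of qq] y2[rule_format, of qq] assms(3) by auto
  have "(z \<in> Y) = (z \<in> sd X {p, qq})" for z
    using y1[rule_format, of z] \<open>e1 = qq\<close> assms(3) unfolding sd_def by auto
  then show ?thesis by blast
qed

lemma sd_assoc: "sd (sd X P) Q = sd X (sd P Q)"
  unfolding sd_def by auto

lemma sd_disj: "P \<inter> Q = {} \<Longrightarrow> sd P Q = P \<union> Q"
  unfolding sd_def by auto

lemma sd_empty: "sd X {} = X"
  unfolding sd_def by auto

lemma cube_char:
  assumes bij: "bij_betw f (Pow {..<k}) S"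
  and adj: "\<forall>A\<in>Pow {..<k}. \<forall>B\<in>Pow {..<k}. omega_adj (f A) (f B) \<longleftrightarrow> card ((A - B) \<union> (B - A)) = 1"
  shows "\<exists>F D. finite D \<and> card D = k \<and> F \<inter> D = {} \<and> S = (\<lambda>E. F \<union> E) ` Pow D"
proof -
  have adj': "card (sd (f A) (f B)) = 1 \<longleftrightarrow> card (sd A B) = 1"
    if "A \<subseteq> {..<k}" "B \<subseteq> {..<k}" for A B
    using adj that by (simp add: adj_iff sd_def)
  have inj: "inj_on f (Pow {..<k})" using bij by (simp add: bij_betw_def)
  define F0 where "F0 = f {}"
  have "\<exists>e. f {i} = sd F0 {e}" if "i < k" for i
  proof -
    have "sd {} {i} = {i}" by (simp add: sd_def)
    then have "card (sd F0 (f {i})) = 1" unfolding F0_def using adj'[of "{}" "{i}"] that by simp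
    then obtain e where e: "\<forall>z. (z \<in> F0) = ((z \<in> f {i}) \<noteq> (z = e))" using sd_one[THEN iffD1] by blast
    have "z \<in> f {i} \<longleftrightarrow> z \<in> sd F0 {e}" for z using e[rule_format, of z] unfolding sd_def by auto
    then show ?thesis by blast
  qed
  then obtain d where d: "\<And>i. i < k \<Longrightarrow> f {i} = sd F0 {d i}" by metis
  have dinj: "inj_on d {..<k}"
  proof (rule inj_onI)
    fix i j assume ij: "i \<in> {..<k}" "j \<in> {..<k}" "d i = d j"
    then have "f {i} = f {j}" using d by simp
    then have "{i} = {j}" using inj ij by (auto dest: inj_onD)
    then show "i = j" by simp
  qed
  have main: "f B = sd F0 (d ` B)" if "B \<subseteq> {..<k}" for B
    using that
  proof (induction "card B" arbitrary: B rule: less_induct)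
    case less
    have finB: "finite B" using less.prems finite_subset by blast
    show ?case
    proof (cases "B = {}")
      case True
      then show ?thesis by (simp add: F0_def sd_empty)
    next
      case False
      then obtain i where i: "i \<in> B" by blast
      show ?thesis
      proof (cases "B = {i}")
        case True
        then show ?thesis using d less.prems by auto
      next
        case False
        then obtain j where j: "j \<in> B" "j \<noteq> i" using i by blast
        define C where "C = B - {i, j}"
        have ik: "i < k" "j < k" using i j less.prems by auto
        have cC: "card C < card B" unfolding C_def using finB i
          by (intro psubset_card_mono) auto
        have cBi: "card (B - {i}) < card B" using finB i by (meson card_Diff1_less)
        have cBj: "card (B - {j}) < card B" using finB j by (meson card_Diff1_less)
        have IHC: "f C = sd F0 (d ` C)" using less.hyps[OF cC] less.prems unfolding C_def by auto
        have IHi: "f (B - {i}) = sd F0 (d ` (B - {i}))" using less.hyps[OF cBi] less.prems by auto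
        have IHj: "f (B - {j}) = sd F0 (d ` (B - {j}))" using less.hyps[OF cBj] less.prems by auto
        have dC: "d i \<notin> d ` C" "d j \<notin> d ` C"
          using inj_on_image_mem_iff[OF dinj, of _ C] less.prems ik unfolding C_def by auto
        have dij: "d i \<noteq> d j" using dinj ik j(2) by (auto simp: inj_on_def)
        have Bi: "B - {i} = insert j C" using i j unfolding C_def by auto
        have Bj: "B - {j} = insert i C" using i j unfolding C_def by auto
        have B: "B = insert i (insert j C)" using i j unfolding C_def by auto
        have "d ` (B - {i}) = sd (d ` C) {d j}" using Bi dC by (simp add: sd_disj)
        then have fi: "f (B - {i}) = sd (f C) {d j}"
          using IHi IHC by (simp add: sd_assoc)
        have "d ` (B - {j}) = sd (d ` C) {d i}" using Bj dC by (simp add: sd_disj)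
        then have fj: "f (B - {j}) = sd (f C) {d i}"
          using IHj IHC by (simp add: sd_assoc)
        have s1: "sd B (B - {i}) = {i}" using i unfolding sd_def by auto
        have s2: "sd B (B - {j}) = {j}" using j unfolding sd_def by auto
        have a1: "card (sd (f B) (sd (f C) {d j})) = 1"
          using adj'[of B "B - {i}"] less.prems s1 fi by auto
        have a2: "card (sd (f B) (sd (f C) {d i})) = 1"
          using adj'[of B "B - {j}"] less.prems s2 fj by auto
        have "B \<noteq> C" using i unfolding C_def by auto
        then have ne: "f B \<noteq> f C" using inj_on_eq_iff[OF inj, of B C] less.prems unfolding C_def
          by auto
        have "f B = sd (f C) {d j, d i}" using square_lemma[OF a1 a2 dij[symmetric] ne] .
        also have "\<dots> = sd F0 (d ` B)"
          unfolding IHC sd_assoc using dC dij B by (simp add: sd_disj insert_commute)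
        finally show ?thesis .
      qed
    qed
  qed
  define D where "D = d ` {..<k}"
  have SD: "S = (\<lambda>E. sd F0 E) ` Pow D"
  proof -
    have P: "image d ` Pow {..<k} = Pow D" unfolding D_def by (rule image_Pow_surj) simp
    have "S = f ` Pow {..<k}" using bij by (simp add: bij_betw_def)
    also have "\<dots> = (\<lambda>B. sd F0 (d ` B)) ` Pow {..<k}"
      by (intro image_cong refl) (simp add: main)
    also have "\<dots> = (\<lambda>E. sd F0 E) ` (image d ` Pow {..<k})" by (simp add: image_image)
    also have "\<dots> = (\<lambda>E. sd F0 E) ` Pow D" using P by simp
    finally show ?thesis .
  qed
  define F where "F = F0 - D"
  have "S = (\<lambda>E. F \<union> E) ` Pow D"
  proof
    show "S \<subseteq> (\<lambda>E. F \<union> E) ` Pow D"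
    proof
      fix Y assume "Y \<in> S"
      then obtain E where E: "E \<subseteq> D" "Y = sd F0 E" using SD by auto
      have "Y = F \<union> sd (F0 \<inter> D) E" using E unfolding F_def sd_def by auto
      moreover have "sd (F0 \<inter> D) E \<subseteq> D" using E unfolding sd_def by auto
      ultimately show "Y \<in> (\<lambda>E. F \<union> E) ` Pow D" by blast
    qed
  next
    show "(\<lambda>E. F \<union> E) ` Pow D \<subseteq> S"
    proof
      fix Y assume "Y \<in> (\<lambda>E. F \<union> E) ` Pow D"
      then obtain E where E: "E \<subseteq> D" "Y = F \<union> E" by auto
      have "Y = sd F0 (sd (F0 \<inter> D) E)" using E unfolding F_def sd_def by auto
      moreover have "sd (F0 \<inter> D) E \<subseteq> D" using E unfolding sd_def by auto
      ultimately show "Y \<in> S" using SD by blast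
    qed
  qed
  moreover have "card D = k" unfolding D_def using dinj by (simp add: card_image)
  moreover have "finite D" unfolding D_def by simp
  moreover have "F \<inter> D = {}" unfolding F_def by auto
  ultimately show ?thesis by (intro exI[of _ F] exI[of _ D]) simp
qed

lemma cube_exists:
  assumes "finite D" "card D = k" "F \<inter> D = {}"
  shows "\<exists>f. bij_betw f (Pow {..<k}) ((\<lambda>E. F \<union> E) ` Pow D) \<and>
     (\<forall>A\<in>Pow {..<k}. \<forall>B\<in>Pow {..<k}. omega_adj (f A) (f B) \<longleftrightarrow> card ((A - B) \<union> (B - A)) = 1)"
proof -
  obtain g where g0: "bij_betw g {0..<card D} D" using ex_bij_betw_nat_finite[OF assms(1)] by blast
  have g: "bij_betw g {..<k} D" using g0 assms(2) by (simp add: atLeast0LessThan)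
  have ginj: "inj_on g {..<k}" using g by (simp add: bij_betw_def)
  have b1: "bij_betw (image g) (Pow {..<k}) (Pow D)" by (rule bij_betw_image_Pow[OF g])
  have b2: "bij_betw (\<lambda>E. F \<union> E) (Pow D) ((\<lambda>E. F \<union> E) ` Pow D)"
  proof (rule bij_betw_imageI)
    show "inj_on (\<lambda>E. F \<union> E) (Pow D)"
    proof (rule inj_onI)
      fix E1 E2 assume "E1 \<in> Pow D" "E2 \<in> Pow D" "F \<union> E1 = F \<union> E2"
      then show "E1 = E2" using assms(3) by blast
    qed
  qed simp
  define f where "f = (\<lambda>E. F \<union> E) \<circ> image g"
  have bij: "bij_betw f (Pow {..<k}) ((\<lambda>E. F \<union> E) ` Pow D)"
    unfolding f_def by (rule bij_betw_trans[OF b1 b2])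
  have adj: "omega_adj (f A) (f B) \<longleftrightarrow> card ((A - B) \<union> (B - A)) = 1"
    if A: "A \<subseteq> {..<k}" and B: "B \<subseteq> {..<k}" for A B
  proof -
    have gA: "g ` A \<subseteq> D" and gB: "g ` B \<subseteq> D" using A B g by (auto simp: bij_betw_def)
    have e1: "g ` (A - B) = g ` A - g ` B" using inj_on_image_set_diff[OF ginj] A B by auto
    have e2: "g ` (B - A) = g ` B - g ` A" using inj_on_image_set_diff[OF ginj] A B by auto
    have "sd (f A) (f B) = (g ` A - g ` B) \<union> (g ` B - g ` A)"
      unfolding f_def sd_def using gA gB assms(3) by auto
    also have "\<dots> = g ` ((A - B) \<union> (B - A))" using e1 e2 by (simp add: image_Un)
    finally have eq: "sd (f A) (f B) = g ` ((A - B) \<union> (B - A))" .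
    have sub: "(A - B) \<union> (B - A) \<subseteq> {..<k}" using A B by auto
    have "card (sd (f A) (f B)) = card ((A - B) \<union> (B - A))"
      unfolding eq using card_image[OF inj_on_subset[OF ginj sub]] by simp
    then show ?thesis by (simp add: adj_iff)
  qed
  show ?thesis using bij adj by blast
qed

definition cov :: "nat \<Rightarrow> nat \<Rightarrow> bool" where
  "cov a b \<longleftrightarrow> (a = 2 \<and> b = 1) \<or> (a = 3 \<and> b = 2) \<or> (3 \<le> a \<and> odd a \<and> b = a + 1)
     \<or> (4 \<le> b \<and> even b \<and> a = b + 1)"

lemma cov_irrefl: "\<not> cov a a" unfolding cov_def by auto

lemma cov_pos: "cov a b \<Longrightarrow> 1 \<le> b" unfolding cov_def by auto

lemma ev4: "even (i::nat) \<Longrightarrow> 3 \<le> i \<Longrightarrow> 4 \<le> i" by presburger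
lemma xi_cover_iff: "xi_cover n a b \<longleftrightarrow> cov a b \<and> a \<le> n \<and> b \<le> n"
proof
  assume h: "xi_cover n a b"
  show "cov a b \<and> a \<le> n \<and> b \<le> n"
  proof (cases "(a = 2 \<and> b = 1 \<and> 2 \<le> n) \<or> (a = 3 \<and> b = 2 \<and> 3 \<le> n)")
    case True then show ?thesis by (auto simp: cov_def)
  next
    case False
    then obtain i where i: "3 \<le> i" "i + 1 \<le> n" "(odd i \<and> a = i \<and> b = i + 1) \<or> (even i \<and> a = i + 1 \<and> b = i)"
      using h unfolding xi_cover_def by blast
    show ?thesis
    proof (cases "odd i")
      case True then show ?thesis using i by (auto simp: cov_def)
    next
      case False then have "4 \<le> i" using ev4 i(1) by blast
      then show ?thesis using i False by (auto simp: cov_def)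
    qed
  qed
next
  assume h: "cov a b \<and> a \<le> n \<and> b \<le> n"
  show "xi_cover n a b"
  proof (cases "(a = 2 \<and> b = 1) \<or> (a = 3 \<and> b = 2)")
    case True then show ?thesis using h unfolding xi_cover_def by auto
  next
    case False
    then have "(3 \<le> a \<and> odd a \<and> b = a + 1) \<or> (4 \<le> b \<and> even b \<and> a = b + 1)" using h unfolding cov_def by blast
    then show ?thesis
    proof
      assume "3 \<le> a \<and> odd a \<and> b = a + 1"
      then show ?thesis using h unfolding xi_cover_def by (intro disjI2 exI[of _ a]) auto
    next
      assume "4 \<le> b \<and> even b \<and> a = b + 1"
      then show ?thesis using h unfolding xi_cover_def by (intro disjI2 exI[of _ b]) auto
    qed
  qed
qed

definition fil :: "nat \<Rightarrow> nat set set" where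
  "fil n = {F. F \<subseteq> {1..n} \<and> (\<forall>a\<in>F. \<forall>b. cov a b \<and> b \<le> n \<longrightarrow> b \<in> F)}"

lemma xi_filters_eq: "xi_filters n = fil n"
proof
  show "xi_filters n \<subseteq> fil n"
  proof
    fix F assume F: "F \<in> xi_filters n"
    have "b \<in> F" if "a \<in> F" "cov a b" "b \<le> n" for a b
    proof -
      have "a \<le> n" using F that(1) unfolding xi_filters_def by auto
      then have "xi_le n a b" unfolding xi_le_def using that xi_cover_iff by auto
      moreover have "b \<in> {1..n}" using that cov_pos by auto
      ultimately show ?thesis using F that(1) unfolding xi_filters_def by blast
    qed
    then show "F \<in> fil n" using F unfolding xi_filters_def fil_def by blast
  qed
next
  show "fil n \<subseteq> xi_filters n"
  proof
    fix F assume F: "F \<in> fil n"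
    have "b \<in> F" if "xi_le n a b" "a \<in> F" for a b
      using that(1) unfolding xi_le_def
    proof (induction rule: rtranclp_induct)
      case base
      then show ?case using that(2) .
    next
      case (step y z)
      then show ?case using F xi_cover_iff unfolding fil_def by blast
    qed
    then show "F \<in> xi_filters n" using F unfolding xi_filters_def fil_def by blast
  qed
qed

definition M :: "nat \<Rightarrow> nat set \<Rightarrow> nat set" where
  "M n F = {a \<in> {1..n}. a \<notin> F \<and> (\<forall>b. cov a b \<and> b \<le> n \<longrightarrow> b \<in> F)}"

lemma finite_fil: "finite (fil n)"
proof -
  have "fil n \<subseteq> Pow {1..n}" unfolding fil_def by auto
  then show ?thesis by (rule finite_subset) simp
qed

lemma T_char:
  "(F \<inter> D = {} \<and> (\<forall>E\<subseteq>D. F \<union> E \<in> fil n)) \<longleftrightarrow> (F \<in> fil n \<and> D \<subseteq> M n F)"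
proof
  assume a: "F \<inter> D = {} \<and> (\<forall>E\<subseteq>D. F \<union> E \<in> fil n)"
  have F: "F \<in> fil n" using a[THEN conjunct2, rule_format, of "{}"] by simp
  have "x \<in> M n F" if x: "x \<in> D" for x
  proof -
    have Fx: "F \<union> {x} \<in> fil n" using a x by auto
    have "b \<in> F" if "cov x b" "b \<le> n" for b
    proof -
      have "b \<in> F \<union> {x}" using Fx that unfolding fil_def by blast
      moreover have "b \<noteq> x" using that(1) cov_irrefl by auto
      ultimately show ?thesis by blast
    qed
    moreover have "x \<in> {1..n}" using Fx unfolding fil_def by blast
    moreover have "x \<notin> F" using a x by blast
    ultimately show ?thesis unfolding M_def by blast
  qed
  then show "F \<in> fil n \<and> D \<subseteq> M n F" using F by blast
next
  assume a: "F \<in> fil n \<and> D \<subseteq> M n F"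
  have "F \<inter> D = {}" using a unfolding M_def by blast
  moreover have "F \<union> E \<in> fil n" if "E \<subseteq> D" for E
  proof -
    have "F \<union> E \<subseteq> {1..n}" using a that unfolding fil_def M_def by blast
    moreover have "b \<in> F \<union> E" if "c \<in> F \<union> E" "cov c b" "b \<le> n" for c b
    proof (cases "c \<in> F")
      case True then show ?thesis using a that unfolding fil_def by blast
    next
      case False then have "c \<in> M n F" using that(1) \<open>E \<subseteq> D\<close> a by blast
      then show ?thesis using that unfolding M_def by blast
    qed
    ultimately show ?thesis unfolding fil_def by blast
  qed
  ultimately show "F \<inter> D = {} \<and> (\<forall>E\<subseteq>D. F \<union> E \<in> fil n)" by blast
qed

lemma q_eq: "q n k = (\<Sum>F\<in>fil n. card (M n F) choose k)"
proof -
  define T where "T = Sigma (fil n) (\<lambda>F. {D. D \<subseteq> M n F \<and> card D = k})"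
  define \<Phi> where "\<Phi> = (\<lambda>(F, D). (\<lambda>E. F \<union> E) ` Pow (D :: nat set))"
  have finM: "finite (M n F)" for F unfolding M_def by simp
  have setq: "{S. S \<subseteq> xi_filters n \<and>
     (\<exists>f. bij_betw f (Pow {..<k}) S \<and>
          (\<forall>A\<in>Pow {..<k}. \<forall>B\<in>Pow {..<k}.
              omega_adj (f A) (f B) \<longleftrightarrow> card ((A - B) \<union> (B - A)) = 1))} = \<Phi> ` T"
  proof
    show "{S. S \<subseteq> xi_filters n \<and>
     (\<exists>f. bij_betw f (Pow {..<k}) S \<and>
          (\<forall>A\<in>Pow {..<k}. \<forall>B\<in>Pow {..<k}.
              omega_adj (f A) (f B) \<longleftrightarrow> card ((A - B) \<union> (B - A)) = 1))} \<subseteq> \<Phi> ` T"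
    proof
      fix S assume "S \<in> {S. S \<subseteq> xi_filters n \<and>
     (\<exists>f. bij_betw f (Pow {..<k}) S \<and>
          (\<forall>A\<in>Pow {..<k}. \<forall>B\<in>Pow {..<k}.
              omega_adj (f A) (f B) \<longleftrightarrow> card ((A - B) \<union> (B - A)) = 1))}"
      then have S1: "S \<subseteq> fil n" using xi_filters_eq by simp
      from \<open>S \<in> _\<close> obtain f where Sf: "bij_betw f (Pow {..<k}) S"
        "\<forall>A\<in>Pow {..<k}. \<forall>B\<in>Pow {..<k}. omega_adj (f A) (f B) \<longleftrightarrow> card ((A - B) \<union> (B - A)) = 1"
        by blast
      obtain F D where FD: "finite D" "card D = k" "F \<inter> D = {}" "S = (\<lambda>E. F \<union> E) ` Pow D"
        using cube_char[OF Sf(1) Sf(2)] by blast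
      have "\<forall>E\<subseteq>D. F \<union> E \<in> fil n" using FD(4) S1 by blast
      then have "F \<in> fil n \<and> D \<subseteq> M n F" using T_char[THEN iffD1] FD(3) by blast
      then have "(F, D) \<in> T" unfolding T_def using FD(2) by blast
      moreover have "S = \<Phi> (F, D)" unfolding \<Phi>_def using FD(4) by simp
      ultimately show "S \<in> \<Phi> ` T" by blast
    qed
  next
    show "\<Phi> ` T \<subseteq> {S. S \<subseteq> xi_filters n \<and>
     (\<exists>f. bij_betw f (Pow {..<k}) S \<and>
          (\<forall>A\<in>Pow {..<k}. \<forall>B\<in>Pow {..<k}.
              omega_adj (f A) (f B) \<longleftrightarrow> card ((A - B) \<union> (B - A)) = 1))}"
    proof
      fix S assume "S \<in> \<Phi> ` T"
      then obtain F D where FD: "F \<in> fil n" "D \<subseteq> M n F" "card D = k" "S = (\<lambda>E. F \<union> E) ` Pow D"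
        unfolding T_def \<Phi>_def by auto
      have c: "F \<inter> D = {} \<and> (\<forall>E\<subseteq>D. F \<union> E \<in> fil n)" using T_char[THEN iffD2] FD(1,2) by blast
      have "S \<subseteq> xi_filters n" using c FD(4) xi_filters_eq by auto
      moreover have "finite D" using FD(2) finM finite_subset by blast
      ultimately show "S \<in> {S. S \<subseteq> xi_filters n \<and>
     (\<exists>f. bij_betw f (Pow {..<k}) S \<and>
          (\<forall>A\<in>Pow {..<k}. \<forall>B\<in>Pow {..<k}.
              omega_adj (f A) (f B) \<longleftrightarrow> card ((A - B) \<union> (B - A)) = 1))}"
        proof -
        obtain f where "bij_betw f (Pow {..<k}) ((\<lambda>E. F \<union> E) ` Pow D) \<and>
          (\<forall>A\<in>Pow {..<k}. \<forall>B\<in>Pow {..<k}. omega_adj (f A) (f B) \<longleftrightarrow> card ((A - B) \<union> (B - A)) = 1)"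
          using cube_exists[of D k F] \<open>finite D\<close> FD(3) c by blast
        then show ?thesis using FD(4) \<open>S \<subseteq> xi_filters n\<close> by blast
      qed
    qed
  qed
  have inj: "inj_on \<Phi> T"
  proof (rule inj_onI)
    fix x y assume x: "x \<in> T" and y: "y \<in> T" and e: "\<Phi> x = \<Phi> y"
    obtain F1 D1 where 1: "x = (F1, D1)" by (cases x)
    obtain F2 D2 where 2: "y = (F2, D2)" by (cases y)
    have "F1 \<inter> D1 = {}" using x 1 unfolding T_def M_def by auto
    have "F2 \<inter> D2 = {}" using y 2 unfolding T_def M_def by auto
    have e': "(\<lambda>E. F1 \<union> E) ` Pow D1 = (\<lambda>E. F2 \<union> E) ` Pow D2" using e 1 2 unfolding \<Phi>_def by simp
    have "F1 \<in> (\<lambda>E. F2 \<union> E) ` Pow D2" using e'[symmetric] by auto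
    then have s1: "F2 \<subseteq> F1" by auto
    have "F2 \<in> (\<lambda>E. F1 \<union> E) ` Pow D1" using e' by auto
    then have s2: "F1 \<subseteq> F2" by auto
    have FF: "F1 = F2" using s1 s2 by blast
    have "F1 \<union> D1 \<in> (\<lambda>E. F2 \<union> E) ` Pow D2" using e'[symmetric] by auto
    then have t1: "D1 \<subseteq> D2" using FF \<open>F1 \<inter> D1 = {}\<close> by auto
    have "F2 \<union> D2 \<in> (\<lambda>E. F1 \<union> E) ` Pow D1" using e' by auto
    then have t2: "D2 \<subseteq> D1" using FF \<open>F2 \<inter> D2 = {}\<close> by auto
    show "x = y" using 1 2 FF t1 t2 by auto
  qed
  have "q n k = card (\<Phi> ` T)" unfolding q_def setq ..
  also have "\<dots> = card T" using inj by (rule card_image)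
  also have "\<dots> = (\<Sum>F\<in>fil n. card {D. D \<subseteq> M n F \<and> card D = k})"
    unfolding T_def using finite_fil finM by (simp add: card_SigmaI)
  also have "\<dots> = (\<Sum>F\<in>fil n. card (M n F) choose k)"
    using finM by (simp add: n_subsets)
  finally show ?thesis .
qed

definition P :: "nat \<Rightarrow> real \<Rightarrow> real" where
  "P n x = (\<Sum>F\<in>fil n. (1 + x) ^ card (M n F))"

lemma card_M_le: "card (M n F) \<le> n"
proof -
  have "M n F \<subseteq> {1..n}" unfolding M_def by auto
  then have "card (M n F) \<le> card {1..n}" by (rule card_mono[rotated]) simp
  then show ?thesis by simp
qed

lemma cube_poly_P: "cube_poly_eval n x = P n x"
proof -
  have q0: "q n k = 0" if "n < k" for k
    unfolding q_eq by (rule sum.neutral) (use binomial_eq_0[OF le_less_trans[OF card_M_le that]] in blast)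
  have sub: "{k. q n k \<noteq> 0} \<subseteq> {..n}"
  proof
    fix k assume "k \<in> {k. q n k \<noteq> 0}"
    then have "\<not> n < k" using q0 by auto
    then show "k \<in> {..n}" by simp
  qed
  have "cube_poly_eval n x = (\<Sum>k\<le>n. real (q n k) * x ^ k)"
    unfolding cube_poly_eval_def by (rule sum.mono_neutral_left[OF finite_atMost sub]) simp
  also have "\<dots> = (\<Sum>k\<le>n. \<Sum>F\<in>fil n. real (card (M n F) choose k) * x ^ k)"
  proof (rule sum.cong[OF refl])
    fix k
    have "real (q n k) = (\<Sum>F\<in>fil n. real (card (M n F) choose k))"
      unfolding q_eq by (rule of_nat_sum)
    then show "real (q n k) * x ^ k = (\<Sum>F\<in>fil n. real (card (M n F) choose k) * x ^ k)"
      by (simp only: sum_distrib_right)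
  qed
  also have "\<dots> = (\<Sum>F\<in>fil n. \<Sum>k\<le>n. real (card (M n F) choose k) * x ^ k)"
    by (rule sum.swap)
  also have "\<dots> = (\<Sum>F\<in>fil n. (1 + x) ^ card (M n F))"
  proof (rule sum.cong[OF refl])
    fix F
    define m where "m = card (M n F)"
    have mn: "m \<le> n" unfolding m_def by (rule card_M_le)
    have "(\<Sum>k\<le>n. real (m choose k) * x ^ k) = (\<Sum>k\<le>m. real (m choose k) * x ^ k)"
    proof (rule sum.mono_neutral_right)
      show "\<forall>i\<in>{..n} - {..m}. real (m choose i) * x ^ i = 0" by (simp add: binomial_eq_0)
    qed (use mn in auto)
    also have "\<dots> = (x + 1) ^ m" by (simp add: binomial_ring)
    finally show "(\<Sum>k\<le>n. real (card (M n F) choose k) * x ^ k) = (1 + x) ^ card (M n F)"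
      unfolding m_def by (simp add: add.commute)
  qed
  finally show ?thesis unfolding P_def .
qed

lemma cov_cases: "cov a b \<Longrightarrow> (b = a + 1 \<and> odd a \<and> 3 \<le> a) \<or> (a = b + 1 \<and> (b = 1 \<or> b = 2 \<or> (even b \<and> 4 \<le> b)))"
  unfolding cov_def by auto

lemma cov_up: "odd a \<Longrightarrow> 3 \<le> a \<Longrightarrow> cov a (a + 1)"
  unfolding cov_def by auto

lemma cov_down: "even b \<Longrightarrow> 4 \<le> b \<Longrightarrow> cov (b + 1) b"
  unfolding cov_def by auto

lemma fil_sub: "F \<in> fil n \<Longrightarrow> F \<subseteq> {1..n}" unfolding fil_def by blast

lemma fil_clos: "F \<in> fil n \<Longrightarrow> a \<in> F \<Longrightarrow> cov a b \<Longrightarrow> b \<le> n \<Longrightarrow> b \<in> F"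
  unfolding fil_def by blast

lemma filI: "F \<subseteq> {1..n} \<Longrightarrow> (\<And>a b. a \<in> F \<Longrightarrow> cov a b \<Longrightarrow> b \<le> n \<Longrightarrow> b \<in> F) \<Longrightarrow> F \<in> fil n"
  unfolding fil_def by blast

lemma M_iff: "a \<in> M n F \<longleftrightarrow> 1 \<le> a \<and> a \<le> n \<and> a \<notin> F \<and> (\<forall>b. cov a b \<and> b \<le> n \<longrightarrow> b \<in> F)"
  unfolding M_def by auto

(* Case B: m even, m >= 2; new top element m+2 is above m+1 *)
lemma filB:
  assumes "even m" "2 \<le> m"
  shows "fil (m + 2) = insert (m + 2) ` fil (m + 1) \<union> fil m"
proof
  show "fil (m + 2) \<subseteq> insert (m + 2) ` fil (m + 1) \<union> fil m"
  proof
    fix F assume F: "F \<in> fil (m + 2)"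
    show "F \<in> insert (m + 2) ` fil (m + 1) \<union> fil m"
    proof (cases "m + 2 \<in> F")
      case True
      have "F - {m + 2} \<in> fil (m + 1)"
      proof (rule filI)
        show "F - {m + 2} \<subseteq> {1..m + 1}" using fil_sub[OF F] by auto
      next
        fix a b assume "a \<in> F - {m + 2}" "cov a b" "b \<le> m + 1"
        then show "b \<in> F - {m + 2}" using fil_clos[OF F, of a b] by auto
      qed
      moreover have "F = insert (m + 2) (F - {m + 2})" using True by auto
      ultimately show ?thesis by blast
    next
      case False
      have c: "cov (m + 1) (m + 2)" using cov_up[of "m + 1"] assms by auto
      have "m + 1 \<notin> F" using fil_clos[OF F _ c] False by auto
      have "F \<in> fil m"
      proof (rule filI)
        show "F \<subseteq> {1..m}" using fil_sub[OF F] False \<open>m + 1 \<notin> F\<close> by (auto simp: subset_eq le_Suc_eq)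
      next
        fix a b assume "a \<in> F" "cov a b" "b \<le> m"
        then show "b \<in> F" using fil_clos[OF F, of a b] by auto
      qed
      then show ?thesis by blast
    qed
  qed
next
  show "insert (m + 2) ` fil (m + 1) \<union> fil m \<subseteq> fil (m + 2)"
  proof
    fix F assume "F \<in> insert (m + 2) ` fil (m + 1) \<union> fil m"
    then consider G where "G \<in> fil (m + 1)" "F = insert (m + 2) G" | "F \<in> fil m" by blast
    then show "F \<in> fil (m + 2)"
    proof cases
      case 1
      show ?thesis
      proof (rule filI)
        show "F \<subseteq> {1..m + 2}" using fil_sub[OF 1(1)] 1(2) by auto
      next
        fix a b assume ab: "a \<in> F" "cov a b" "b \<le> m + 2"
        show "b \<in> F"
        proof (cases "a = m + 2")
          case True
          then show ?thesis using cov_cases[OF ab(2)] ab(3) assms by auto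
        next
          case False
          then have "a \<in> G" using ab 1 by auto
          then show ?thesis using fil_clos[OF 1(1) _ ab(2)] ab(3) 1(2) by (cases "b = m + 2") auto
        qed
      qed
    next
      case 2
      show ?thesis
      proof (rule filI)
        show "F \<subseteq> {1..m + 2}" using fil_sub[OF 2] by auto
      next
        fix a b assume ab: "a \<in> F" "cov a b" "b \<le> m + 2"
        have "a \<le> m" using fil_sub[OF 2] ab(1) by auto
        moreover have "odd a \<longrightarrow> a \<noteq> m" using assms(1) by auto
        ultimately have "b \<le> m" using cov_cases[OF ab(2)] assms by auto
        then show "b \<in> F" using fil_clos[OF 2 ab(1,2)] by auto
      qed
    qed
  qed
qed

lemma MB1:
  assumes "even m" "2 \<le> m" "G \<in> fil (m + 1)"
  shows "M (m + 2) (insert (m + 2) G) = M (m + 1) G"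
proof -
  have "m + 2 \<notin> G" using fil_sub[OF assms(3)] by auto
  show ?thesis
  proof (rule set_eqI)
    fix a
    show "a \<in> M (m + 2) (insert (m + 2) G) \<longleftrightarrow> a \<in> M (m + 1) G"
      unfolding M_iff using \<open>m + 2 \<notin> G\<close> by (auto simp: le_Suc_eq)
  qed
qed

lemma MB2:
  assumes "even m" "2 \<le> m" "H \<in> fil m"
  shows "M (m + 2) H = insert (m + 2) (M m H)"
proof (rule set_eqI)
  fix a
  have H: "H \<subseteq> {1..m}" using fil_sub[OF assms(3)] .
  show "a \<in> M (m + 2) H \<longleftrightarrow> a \<in> insert (m + 2) (M m H)"
  proof (cases "a \<le> m")
    case True
    have "(\<forall>b. cov a b \<and> b \<le> m + 2 \<longrightarrow> b \<in> H) \<longleftrightarrow> (\<forall>b. cov a b \<and> b \<le> m \<longrightarrow> b \<in> H)"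
    proof -
      have "odd a \<longrightarrow> a \<noteq> m" using assms(1) by auto
      then have h: "cov a b \<Longrightarrow> b \<le> m" for b using cov_cases[of a b] True assms by auto
      show ?thesis
      proof
        assume A: "\<forall>b. cov a b \<and> b \<le> m + 2 \<longrightarrow> b \<in> H"
        show "\<forall>b. cov a b \<and> b \<le> m \<longrightarrow> b \<in> H" using A by auto
      next
        assume A: "\<forall>b. cov a b \<and> b \<le> m \<longrightarrow> b \<in> H"
        show "\<forall>b. cov a b \<and> b \<le> m + 2 \<longrightarrow> b \<in> H" using A h by blast
      qed
    qed
    then show ?thesis using True by (auto simp: M_iff)
  next
    case False
    then consider "a = m + 1" | "a = m + 2" | "a > m + 2" by linarith
    then show ?thesis
    proof cases
      case 1
      have "cov a (m + 2)" using cov_up[of "m + 1"] assms 1 by auto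
      moreover have "m + 2 \<notin> H" using H by auto
      ultimately have "a \<notin> M (m + 2) H" unfolding M_iff by auto
      then show ?thesis using 1 by (auto simp: M_iff)
    next
      case 2
      have "\<not> cov a b" if "b \<le> m + 2" for b using cov_cases[of a b] 2 that assms by auto
      moreover have "a \<notin> H" using H 2 by auto
      ultimately have "a \<in> M (m + 2) H" unfolding M_iff using 2 by auto
      then show ?thesis using 2 by auto
    next
      case 3
      then show ?thesis by (auto simp: M_iff)
    qed
  qed
qed

lemma PB:
  assumes "even m" "2 \<le> m"
  shows "P (m + 2) x = P (m + 1) x + (1 + x) * P m x"
proof -
  have "m + 2 \<notin> F" if "F \<in> fil m" for F using fil_sub[OF that] by auto
  then have disj: "insert (m + 2) ` fil (m + 1) \<inter> fil m = {}" by blast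
  have inj: "inj_on (insert (m + 2)) (fil (m + 1))"
  proof (rule inj_onI)
    fix G1 G2 assume "G1 \<in> fil (m + 1)" "G2 \<in> fil (m + 1)" "insert (m + 2) G1 = insert (m + 2) G2"
    moreover have "m + 2 \<notin> G1" "m + 2 \<notin> G2" using fil_sub[OF \<open>G1 \<in> _\<close>] fil_sub[OF \<open>G2 \<in> _\<close>] by auto
    ultimately show "G1 = G2" by (metis insert_ident)
  qed
  have "P (m + 2) x = (\<Sum>F\<in>insert (m + 2) ` fil (m + 1). (1 + x) ^ card (M (m + 2) F))
      + (\<Sum>F\<in>fil m. (1 + x) ^ card (M (m + 2) F))"
    unfolding P_def filB[OF assms] by (rule sum.union_disjoint[OF finite_imageI[OF finite_fil] finite_fil disj])
  also have "(\<Sum>F\<in>insert (m + 2) ` fil (m + 1). (1 + x) ^ card (M (m + 2) F)) = P (m + 1) x"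
    unfolding P_def sum.reindex[OF inj]
  proof (rule sum.cong[OF refl])
    fix G assume "G \<in> fil (m + 1)"
    then show "((\<lambda>F. (1 + x) ^ card (M (m + 2) F)) \<circ> insert (m + 2)) G = (1 + x) ^ card (M (m + 1) G)"
      using MB1[OF assms \<open>G \<in> fil (m + 1)\<close>] by simp
  qed
  also have "(\<Sum>F\<in>fil m. (1 + x) ^ card (M (m + 2) F)) = (\<Sum>F\<in>fil m. (1 + x) * (1 + x) ^ card (M m F))"
  proof (rule sum.cong[OF refl])
    fix F assume F: "F \<in> fil m"
    have "m + 2 \<notin> M m F" unfolding M_iff by auto
    moreover have "finite (M m F)" unfolding M_def by simp
    ultimately show "(1 + x) ^ card (M (m + 2) F) = (1 + x) * (1 + x) ^ card (M m F)"
      unfolding MB2[OF assms F] by simp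
  qed
  also have "\<dots> = (1 + x) * P m x" unfolding P_def by (simp add: sum_distrib_left)
  finally show ?thesis .
qed

lemma cov_small: "a \<le> 3 \<Longrightarrow> b \<le> 3 \<Longrightarrow> cov a b \<longleftrightarrow> (a = 2 \<and> b = 1) \<or> (a = 3 \<and> b = 2)"
  unfolding cov_def by auto

lemma fil_small:
  assumes "n \<le> 3"
  shows "F \<in> fil n \<longleftrightarrow> F \<subseteq> {1..n} \<and> (2 \<in> F \<longrightarrow> 1 \<in> F) \<and> (3 \<in> F \<longrightarrow> 2 \<in> F)"
proof
  assume F: "F \<in> fil n"
  have s: "F \<subseteq> {1..n}" using fil_sub[OF F] .
  have "1 \<in> F" if "2 \<in> F"
  proof -
    have "2 \<le> n" using s that by auto
    then show ?thesis using fil_clos[OF F that, of 1] by (simp add: cov_def)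
  qed
  moreover have "2 \<in> F" if "3 \<in> F"
  proof -
    have "3 \<le> n" using s that by auto
    then show ?thesis using fil_clos[OF F that, of 2] by (simp add: cov_def)
  qed
  ultimately show "F \<subseteq> {1..n} \<and> (2 \<in> F \<longrightarrow> 1 \<in> F) \<and> (3 \<in> F \<longrightarrow> 2 \<in> F)" using s by blast
next
  assume h: "F \<subseteq> {1..n} \<and> (2 \<in> F \<longrightarrow> 1 \<in> F) \<and> (3 \<in> F \<longrightarrow> 2 \<in> F)"
  show "F \<in> fil n"
  proof (rule filI)
    show "F \<subseteq> {1..n}" using h by blast
  next
    fix a b assume ab: "a \<in> F" "cov a b" "b \<le> n"
    have "a \<le> 3" using h ab(1) assms by auto
    then have "(a = 2 \<and> b = 1) \<or> (a = 3 \<and> b = 2)" using cov_small[of a b] ab assms by auto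
    then show "b \<in> F" using h ab(1) by auto
  qed
qed

lemma M_small:
  assumes "n \<le> 3"
  shows "a \<in> M n F \<longleftrightarrow> 1 \<le> a \<and> a \<le> n \<and> a \<notin> F \<and> (a = 2 \<longrightarrow> 1 \<in> F) \<and> (a = 3 \<longrightarrow> 2 \<in> F)"
proof
  assume a: "a \<in> M n F"
  then have "1 \<le> a \<and> a \<le> n \<and> a \<notin> F" and c: "\<forall>b. cov a b \<and> b \<le> n \<longrightarrow> b \<in> F" unfolding M_iff by auto
  moreover have "a = 2 \<longrightarrow> 1 \<in> F" using c \<open>1 \<le> a \<and> a \<le> n \<and> a \<notin> F\<close> by (auto simp: cov_def)
  moreover have "a = 3 \<longrightarrow> 2 \<in> F" using c \<open>1 \<le> a \<and> a \<le> n \<and> a \<notin> F\<close> by (auto simp: cov_def)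
  ultimately show "1 \<le> a \<and> a \<le> n \<and> a \<notin> F \<and> (a = 2 \<longrightarrow> 1 \<in> F) \<and> (a = 3 \<longrightarrow> 2 \<in> F)" by blast
next
  assume h: "1 \<le> a \<and> a \<le> n \<and> a \<notin> F \<and> (a = 2 \<longrightarrow> 1 \<in> F) \<and> (a = 3 \<longrightarrow> 2 \<in> F)"
  have "b \<in> F" if "cov a b" "b \<le> n" for b
  proof -
    have "(a = 2 \<and> b = 1) \<or> (a = 3 \<and> b = 2)" using cov_small[of a b] that h assms by auto
    then show ?thesis using h by auto
  qed
  then show "a \<in> M n F" unfolding M_iff using h by blast
qed

lemma fil0: "fil 0 = {{}}"
  using fil_small[of 0] by auto

lemma fil1: "fil 1 = {{}, {1}}"
proof -
  have "F \<in> fil 1 \<longleftrightarrow> F = {} \<or> F = {1}" for F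
    using fil_small[of 1 F] by (auto simp: subset_singleton_iff)
  then show ?thesis by blast
qed

lemma fil2: "fil 2 = {{}, {1}, {1, 2}}"
proof -
  have "F \<in> fil 2 \<longleftrightarrow> F = {} \<or> F = {1} \<or> F = {1, 2}" for F
  proof
    assume "F \<in> fil 2"
    then have s: "F \<subseteq> {1, 2}" and c: "2 \<in> F \<longrightarrow> 1 \<in> F" using fil_small[of 2 F] by auto
    show "F = {} \<or> F = {1} \<or> F = {1, 2}"
      using s c by (cases "1 \<in> F"; cases "2 \<in> F") auto
  next
    assume "F = {} \<or> F = {1} \<or> F = {1, 2}"
    then show "F \<in> fil 2" using fil_small[of 2 F] by auto
  qed
  then show ?thesis by blast
qed

lemma fil3: "fil 3 = {{}, {1}, {1, 2}, {1, 2, 3}}"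
proof -
  have "F \<in> fil 3 \<longleftrightarrow> F = {} \<or> F = {1} \<or> F = {1, 2} \<or> F = {1, 2, 3}" for F
  proof
    assume "F \<in> fil 3"
    then have s: "F \<subseteq> {1, 2, 3}" and c: "2 \<in> F \<longrightarrow> 1 \<in> F" "3 \<in> F \<longrightarrow> 2 \<in> F"
      using fil_small[of 3 F] by auto
    show "F = {} \<or> F = {1} \<or> F = {1, 2} \<or> F = {1, 2, 3}"
      using s c by (cases "1 \<in> F"; cases "2 \<in> F"; cases "3 \<in> F") auto
  next
    assume "F = {} \<or> F = {1} \<or> F = {1, 2} \<or> F = {1, 2, 3}"
    then show "F \<in> fil 3" using fil_small[of 3 F] by auto
  qed
  then show ?thesis by blast
qed

lemma P0: "P 0 x = 1"
  unfolding P_def fil0 by (simp add: M_def)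

lemma P1: "P 1 x = 2 + x"
proof -
  have "M 1 {} = {1}"
  proof -
    have "a \<in> M 1 {} \<longleftrightarrow> a \<in> {1}" for a using M_small[of 1 a "{}"] by auto
    then show ?thesis by blast
  qed
  moreover have "M 1 {1} = {}"
  proof -
    have "a \<in> M 1 {1} \<longleftrightarrow> a \<in> {}" for a using M_small[of 1 a "{1}"] by auto
    then show ?thesis by blast
  qed
  ultimately show ?thesis unfolding P_def fil1 by simp
qed

lemma P2: "P 2 x = 3 + 2 * x"
proof -
  have "M 2 {} = {1}"
  proof -
    have "a \<in> M 2 {} \<longleftrightarrow> a \<in> {1}" for a using M_small[of 2 a "{}"] by auto
    then show ?thesis by blast
  qed
  moreover have "M 2 {1} = {2}"
  proof -
    have "a \<in> M 2 {1} \<longleftrightarrow> a \<in> {2}" for a using M_small[of 2 a "{1}"] by auto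
    then show ?thesis by blast
  qed
  moreover have "M 2 {1, 2} = {}"
  proof -
    have "a \<in> M 2 {1, 2} \<longleftrightarrow> a \<in> {}" for a using M_small[of 2 a "{1, 2}"] by auto
    then show ?thesis by blast
  qed
  ultimately show ?thesis unfolding P_def fil2 by simp
qed

lemma P3: "P 3 x = 4 + 3 * x"
proof -
  have "M 3 {} = {1}"
  proof -
    have "a \<in> M 3 {} \<longleftrightarrow> a \<in> {1}" for a using M_small[of 3 a "{}"] by auto
    then show ?thesis by blast
  qed
  moreover have "M 3 {1} = {2}"
  proof -
    have "a \<in> M 3 {1} \<longleftrightarrow> a \<in> {2}" for a using M_small[of 3 a "{1}"] by auto
    then show ?thesis by blast
  qed
  moreover have "M 3 {1, 2} = {3}"
  proof -
    have "a \<in> M 3 {1, 2} \<longleftrightarrow> a \<in> {3}" for a using M_small[of 3 a "{1, 2}"] by auto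
    then show ?thesis by blast
  qed
  moreover have "M 3 {1, 2, 3} = {}"
  proof -
    have "a \<in> M 3 {1, 2, 3} \<longleftrightarrow> a \<in> {}" for a using M_small[of 3 a "{1, 2, 3}"] by auto
    then show ?thesis by blast
  qed
  moreover have "{1::nat, 2} \<noteq> {1, 2, 3}" by auto
  ultimately show ?thesis unfolding P_def fil3 by simp
qed

(* Case A: m odd, m >= 3; new element m+2 is below m+1 *)
lemma covA:
  assumes "odd m" "3 \<le> m"
  shows "cov (m + 2) (m + 1)"
    and "\<And>a. a \<le> m + 1 \<Longrightarrow> \<not> cov a (m + 2)"
    and "\<And>b. cov (m + 2) b \<Longrightarrow> b \<le> m + 2 \<Longrightarrow> b = m + 1"
    and "\<And>b. b \<le> m + 1 \<Longrightarrow> \<not> cov (m + 1) b"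
proof -
  show "cov (m + 2) (m + 1)" using cov_down[of "m + 1"] assms by auto
  show "\<not> cov a (m + 2)" if "a \<le> m + 1" for a using cov_cases[of a "m + 2"] that assms by auto
  show "b = m + 1" if "cov (m + 2) b" "b \<le> m + 2" for b using cov_cases[OF that(1)] that(2) assms by auto
  show "\<not> cov (m + 1) b" if "b \<le> m + 1" for b using cov_cases[of "m + 1" b] that assms by auto
qed

lemma filA:
  assumes "odd m" "3 \<le> m"
  shows "fil (m + 2) = fil (m + 1) \<union> insert (m + 2) ` {G \<in> fil (m + 1). m + 1 \<in> G}"
proof
  note c = covA[OF assms]
  show "fil (m + 2) \<subseteq> fil (m + 1) \<union> insert (m + 2) ` {G \<in> fil (m + 1). m + 1 \<in> G}"
  proof
    fix F assume F: "F \<in> fil (m + 2)"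
    show "F \<in> fil (m + 1) \<union> insert (m + 2) ` {G \<in> fil (m + 1). m + 1 \<in> G}"
    proof (cases "m + 2 \<in> F")
      case True
      have "m + 1 \<in> F" using fil_clos[OF F True c(1)] by simp
      have "F - {m + 2} \<in> fil (m + 1)"
      proof (rule filI)
        show "F - {m + 2} \<subseteq> {1..m + 1}" using fil_sub[OF F] by auto
      next
        fix a b assume "a \<in> F - {m + 2}" "cov a b" "b \<le> m + 1"
        then show "b \<in> F - {m + 2}" using fil_clos[OF F, of a b] by auto
      qed
      moreover have "m + 1 \<in> F - {m + 2}" using \<open>m + 1 \<in> F\<close> by auto
      moreover have "F = insert (m + 2) (F - {m + 2})" using True by auto
      ultimately show ?thesis by blast
    next
      case False
      have "F \<in> fil (m + 1)"
      proof (rule filI)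
        show "F \<subseteq> {1..m + 1}" using fil_sub[OF F] False by (auto simp: subset_eq le_Suc_eq)
      next
        fix a b assume "a \<in> F" "cov a b" "b \<le> m + 1"
        then show "b \<in> F" using fil_clos[OF F, of a b] by auto
      qed
      then show ?thesis by blast
    qed
  qed
next
  note c = covA[OF assms]
  show "fil (m + 1) \<union> insert (m + 2) ` {G \<in> fil (m + 1). m + 1 \<in> G} \<subseteq> fil (m + 2)"
  proof
    fix F assume "F \<in> fil (m + 1) \<union> insert (m + 2) ` {G \<in> fil (m + 1). m + 1 \<in> G}"
    then consider "F \<in> fil (m + 1)" | G where "G \<in> fil (m + 1)" "m + 1 \<in> G" "F = insert (m + 2) G" by blast
    then show "F \<in> fil (m + 2)"
    proof cases
      case 1
      show ?thesis
      proof (rule filI)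
        show "F \<subseteq> {1..m + 2}" using fil_sub[OF 1] by auto
      next
        fix a b assume ab: "a \<in> F" "cov a b" "b \<le> m + 2"
        have "a \<le> m + 1" using fil_sub[OF 1] ab(1) by auto
        then have "b \<noteq> m + 2" using c(2) ab(2) by auto
        then show "b \<in> F" using fil_clos[OF 1 ab(1,2)] ab(3) by auto
      qed
    next
      case 2
      show ?thesis
      proof (rule filI)
        show "F \<subseteq> {1..m + 2}" using fil_sub[OF 2(1)] 2(3) by auto
      next
        fix a b assume ab: "a \<in> F" "cov a b" "b \<le> m + 2"
        show "b \<in> F"
        proof (cases "a = m + 2")
          case True
          then have "b = m + 1" using c(3) ab(2,3) by auto
          then show ?thesis using 2 by auto
        next
          case False
          then have "a \<in> G" using ab 2 by auto
          then show ?thesis using fil_clos[OF 2(1) _ ab(2)] ab(3) 2(3) by (cases "b = m + 2") auto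
        qed
      qed
    qed
  qed
qed

lemma MA1:
  assumes "odd m" "3 \<le> m" "G \<in> fil (m + 1)"
  shows "a \<in> M (m + 2) G \<longleftrightarrow> a \<in> M (m + 1) G \<or> (a = m + 2 \<and> m + 1 \<in> G)"
proof -
  note c = covA[OF assms(1,2)]
  have G: "G \<subseteq> {1..m + 1}" using fil_sub[OF assms(3)] .
  consider "a \<le> m + 1" | "a = m + 2" | "a > m + 2" by linarith
  then show ?thesis
  proof cases
    case 1
    have "(\<forall>b. cov a b \<and> b \<le> m + 2 \<longrightarrow> b \<in> G) \<longleftrightarrow> (\<forall>b. cov a b \<and> b \<le> m + 1 \<longrightarrow> b \<in> G)"
    proof
      assume A: "\<forall>b. cov a b \<and> b \<le> m + 2 \<longrightarrow> b \<in> G"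
      show "\<forall>b. cov a b \<and> b \<le> m + 1 \<longrightarrow> b \<in> G" using A by auto
    next
      assume A: "\<forall>b. cov a b \<and> b \<le> m + 1 \<longrightarrow> b \<in> G"
      have h: "cov a b \<Longrightarrow> b \<le> m + 2 \<Longrightarrow> b \<le> m + 1" for b using c(2)[OF 1] by (cases "b = m + 2") auto
      show "\<forall>b. cov a b \<and> b \<le> m + 2 \<longrightarrow> b \<in> G" using A h by blast
    qed
    then show ?thesis using 1 by (auto simp: M_iff)
  next
    case 2
    have "m + 2 \<notin> G" using G by auto
    have "(\<forall>b. cov a b \<and> b \<le> m + 2 \<longrightarrow> b \<in> G) \<longleftrightarrow> m + 1 \<in> G"
      using c(1) c(3) 2 by auto
    then show ?thesis using 2 \<open>m + 2 \<notin> G\<close> by (auto simp: M_iff)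
  next
    case 3
    then show ?thesis by (auto simp: M_iff)
  qed
qed

lemma MA2:
  assumes "odd m" "3 \<le> m" "G \<in> fil (m + 1)"
  shows "M (m + 2) (insert (m + 2) G) = M (m + 1) G"
proof -
  have "m + 2 \<notin> G" using fil_sub[OF assms(3)] by auto
  show ?thesis
  proof (rule set_eqI)
    fix a
    show "a \<in> M (m + 2) (insert (m + 2) G) \<longleftrightarrow> a \<in> M (m + 1) G"
      unfolding M_iff using \<open>m + 2 \<notin> G\<close> by (auto simp: le_Suc_eq)
  qed
qed

lemma filA1:
  assumes "odd m" "3 \<le> m"
  shows "{G \<in> fil (m + 1). m + 1 \<in> G} = insert (m + 1) ` fil m"
proof
  note c = covA[OF assms]
  show "{G \<in> fil (m + 1). m + 1 \<in> G} \<subseteq> insert (m + 1) ` fil m"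
  proof
    fix G assume "G \<in> {G \<in> fil (m + 1). m + 1 \<in> G}"
    then have G: "G \<in> fil (m + 1)" "m + 1 \<in> G" by auto
    have "G - {m + 1} \<in> fil m"
    proof (rule filI)
      show "G - {m + 1} \<subseteq> {1..m}" using fil_sub[OF G(1)] by (auto simp: subset_eq le_Suc_eq)
    next
      fix a b assume "a \<in> G - {m + 1}" "cov a b" "b \<le> m"
      then show "b \<in> G - {m + 1}" using fil_clos[OF G(1), of a b] by auto
    qed
    moreover have "G = insert (m + 1) (G - {m + 1})" using G by auto
    ultimately show "G \<in> insert (m + 1) ` fil m" by blast
  qed
next
  note c = covA[OF assms]
  show "insert (m + 1) ` fil m \<subseteq> {G \<in> fil (m + 1). m + 1 \<in> G}"
  proof
    fix G assume "G \<in> insert (m + 1) ` fil m"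
    then obtain H where H: "H \<in> fil m" "G = insert (m + 1) H" by blast
    have "G \<in> fil (m + 1)"
    proof (rule filI)
      show "G \<subseteq> {1..m + 1}" using fil_sub[OF H(1)] H(2) by auto
    next
      fix a b assume ab: "a \<in> G" "cov a b" "b \<le> m + 1"
      show "b \<in> G"
      proof (cases "a = m + 1")
        case True
        then show ?thesis using c(4) ab by auto
      next
        case False
        then have "a \<in> H" using ab H by auto
        then show ?thesis using fil_clos[OF H(1) _ ab(2)] ab(3) H(2) by (cases "b = m + 1") auto
      qed
    qed
    then show "G \<in> {G \<in> fil (m + 1). m + 1 \<in> G}" using H by auto
  qed
qed

lemma MA3:
  assumes "H \<in> fil m"
  shows "M (m + 1) (insert (m + 1) H) = M m H"
proof -
  have "m + 1 \<notin> H" using fil_sub[OF assms] by auto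
  show ?thesis
  proof (rule set_eqI)
    fix a
    show "a \<in> M (m + 1) (insert (m + 1) H) \<longleftrightarrow> a \<in> M m H"
      unfolding M_iff using \<open>m + 1 \<notin> H\<close> by (auto simp: le_Suc_eq)
  qed
qed

lemma PA:
  assumes "odd m" "3 \<le> m"
  shows "P (m + 2) x = P (m + 1) x + (1 + x) * P m x"
proof -
  define A1 where "A1 = {G \<in> fil (m + 1). m + 1 \<in> G}"
  define f where "f G = (1 + x) ^ card (M (m + 1) G)" for G
  have A1sub: "A1 \<subseteq> fil (m + 1)" unfolding A1_def by auto
  have finA1: "finite A1" using A1sub finite_fil finite_subset by blast
  have "m + 2 \<notin> F" if "F \<in> fil (m + 1)" for F using fil_sub[OF that] by auto
  then have disj: "fil (m + 1) \<inter> insert (m + 2) ` A1 = {}" by blast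
  have inj2: "inj_on (insert (m + 2)) A1"
  proof (rule inj_onI)
    fix G1 G2 assume "G1 \<in> A1" "G2 \<in> A1" "insert (m + 2) G1 = insert (m + 2) G2"
    moreover have "m + 2 \<notin> G1" "m + 2 \<notin> G2" using fil_sub A1sub \<open>G1 \<in> A1\<close> \<open>G2 \<in> A1\<close> by fastforce+
    ultimately show "G1 = G2" by (metis insert_ident)
  qed
  have inj1: "inj_on (insert (m + 1)) (fil m)"
  proof (rule inj_onI)
    fix G1 G2 assume "G1 \<in> fil m" "G2 \<in> fil m" "insert (m + 1) G1 = insert (m + 1) G2"
    moreover have "m + 1 \<notin> G1" "m + 1 \<notin> G2" using fil_sub[OF \<open>G1 \<in> _\<close>] fil_sub[OF \<open>G2 \<in> _\<close>] by auto
    ultimately show "G1 = G2" by (metis insert_ident)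
  qed
  have S1: "sum f A1 = P m x"
  proof -
    have "sum f A1 = sum f (insert (m + 1) ` fil m)" unfolding A1_def filA1[OF assms] ..
    also have "\<dots> = sum (f \<circ> insert (m + 1)) (fil m)" by (rule sum.reindex[OF inj1])
    also have "\<dots> = P m x" unfolding P_def
    proof (rule sum.cong[OF refl])
      fix H assume "H \<in> fil m"
      then show "(f \<circ> insert (m + 1)) H = (1 + x) ^ card (M m H)"
        using MA3[OF \<open>H \<in> fil m\<close>] unfolding f_def by simp
    qed
    finally show ?thesis .
  qed
  have Pm1: "P (m + 1) x = sum f (fil (m + 1) - A1) + sum f A1"
    unfolding P_def f_def[symmetric] by (rule sum.subset_diff[OF A1sub finite_fil])
  have "P (m + 2) x = (\<Sum>F\<in>fil (m + 1). (1 + x) ^ card (M (m + 2) F))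
      + (\<Sum>F\<in>insert (m + 2) ` A1. (1 + x) ^ card (M (m + 2) F))"
    unfolding P_def filA[OF assms] A1_def[symmetric]
    by (rule sum.union_disjoint[OF finite_fil finite_imageI[OF finA1] disj])
  also have "(\<Sum>F\<in>insert (m + 2) ` A1. (1 + x) ^ card (M (m + 2) F)) = sum f A1"
    unfolding sum.reindex[OF inj2]
  proof (rule sum.cong[OF refl])
    fix G assume "G \<in> A1"
    then have "G \<in> fil (m + 1)" using A1sub by auto
    then show "((\<lambda>F. (1 + x) ^ card (M (m + 2) F)) \<circ> insert (m + 2)) G = f G"
      using MA2[OF assms \<open>G \<in> fil (m + 1)\<close>] unfolding f_def by simp
  qed
  also have "(\<Sum>F\<in>fil (m + 1). (1 + x) ^ card (M (m + 2) F))
      = (\<Sum>F\<in>fil (m + 1) - A1. (1 + x) ^ card (M (m + 2) F)) + (\<Sum>F\<in>A1. (1 + x) ^ card (M (m + 2) F))"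
    by (rule sum.subset_diff[OF A1sub finite_fil])
  also have "(\<Sum>F\<in>fil (m + 1) - A1. (1 + x) ^ card (M (m + 2) F)) = sum f (fil (m + 1) - A1)"
  proof (rule sum.cong[OF refl])
    fix G assume G: "G \<in> fil (m + 1) - A1"
    then have "m + 1 \<notin> G" "G \<in> fil (m + 1)" unfolding A1_def by auto
    then have "M (m + 2) G = M (m + 1) G" using MA1[OF assms, of G] by auto
    then show "(1 + x) ^ card (M (m + 2) G) = f G" unfolding f_def by simp
  qed
  also have "(\<Sum>F\<in>A1. (1 + x) ^ card (M (m + 2) F)) = (1 + x) * sum f A1"
    unfolding sum_distrib_left
  proof (rule sum.cong[OF refl])
    fix G assume G: "G \<in> A1"
    then have "m + 1 \<in> G" "G \<in> fil (m + 1)" unfolding A1_def by auto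
    then have e: "M (m + 2) G = insert (m + 2) (M (m + 1) G)" using MA1[OF assms, of G] by auto
    have "m + 2 \<notin> M (m + 1) G" unfolding M_iff by auto
    moreover have "finite (M (m + 1) G)" unfolding M_def by simp
    ultimately show "(1 + x) ^ card (M (m + 2) G) = (1 + x) * f G" unfolding e f_def by simp
  qed
  finally show ?thesis using Pm1 S1 by (simp add: algebra_simps)
qed

lemma fps_part:
  fixes a :: "nat \<Rightarrow> real" and x :: real
  assumes a0: "a 0 = 1" and a1: "a 1 = 2 + x" and a2: "a 2 = 3 + 2 * x" and a3: "a 3 = 4 + 3 * x"
    and rec: "\<And>n. 4 \<le> n \<Longrightarrow> a n = a (n - 1) + (1 + x) * a (n - 2)"
  shows "Abs_fps a = (2 - fps_X) / (1 - fps_X - fps_const (x + 1) * fps_X ^ 2)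
           + fps_const (1 + x) * fps_X - 1"
proof -
  define b where "b n = (if n = 0 then 2 else if n = 1 then 1 else a n)" for n
  define g where "g = Abs_fps b"
  define D :: "real fps" where "D = 1 - fps_X - fps_const (x + 1) * fps_X ^ 2"
  have gD: "g * D = 2 - fps_X"
  proof (rule fps_ext)
    fix n
    have e: "g * D = g - fps_X * g - fps_const (x + 1) * (fps_X ^ 2 * g)"
      unfolding D_def by (simp add: algebra_simps)
    have l: "fps_nth (g * D) n = b n - (if n = 0 then 0 else b (n - 1)) - (x + 1) * (if n < 2 then 0 else b (n - 2))"
      unfolding e by (simp add: fps_X_power_mult_nth g_def)
    have r: "fps_nth (2 - fps_X :: real fps) n = (if n = 0 then 2 else if n = 1 then -1 else 0)"
      by (simp add: numeral_fps_const fps_X_def)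
    consider "n = 0" | "n = 1" | "n = 2" | "n = 3" | "4 \<le> n" by linarith
    then show "fps_nth (g * D) n = fps_nth (2 - fps_X :: real fps) n"
    proof cases
      case 5
      then have "b n = a n" "b (n - 1) = a (n - 1)" "b (n - 2) = a (n - 2)" unfolding b_def by auto
      then show ?thesis using l r rec[OF 5] 5 by (simp add: algebra_simps)
    qed (unfold l r; simp add: b_def a0 a1 a2 a3 algebra_simps)+
  qed
  have D0: "D \<noteq> 0"
  proof
    assume "D = 0"
    then have "fps_nth D 0 = 0" by simp
    then show False unfolding D_def by simp
  qed
  have gdiv: "(2 - fps_X) / D = g" using gD D0 by (metis nonzero_mult_div_cancel_right)
  have a1': "a (Suc 0) = 2 + x" using a1 by simp
  show ?thesis
    unfolding D_def[symmetric] gdiv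
  proof (rule fps_ext)
    fix n
    show "fps_nth (Abs_fps a) n = fps_nth (g + fps_const (1 + x) * fps_X - 1) n"
      by (cases "n = 0"; cases "n = 1") (simp_all add: g_def b_def a0 a1 a1' fps_X_def)
  qed
qed

lemma P_rec:
  assumes "4 \<le> n"
  shows "P n x = P (n - 1) x + (1 + x) * P (n - 2) x"
proof -
  obtain m where m: "n = m + 2" "2 \<le> m" using assms by (metis add.commute le_Suc_ex add_leD2 nat_add_left_cancel_le numeral_Bit0 numeral_plus_numeral)
  have e1: "n - 1 = m + 1" "n - 2 = m" using m by auto
  show ?thesis
  proof (cases "even m")
    case True
    then show ?thesis using PB[OF True m(2), of x] m(1) e1 by simp
  next
    case False
    then have "3 \<le> m" using m(2) by presburger
    then show ?thesis using PA[OF False, of x] m(1) e1 by simp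
  qed
qed

theorem mainTheorem10:
  fixes x :: real
  shows "Abs_fps (\<lambda>n. cube_poly_eval n x) =
           (2 - fps_X) / (1 - fps_X - fps_const (x + 1) * fps_X ^ 2)
           + fps_const (1 + x) * fps_X - 1"
proof (rule fps_part)
  show "cube_poly_eval 0 x = 1" using P0 cube_poly_P by simp
  show "cube_poly_eval 1 x = 2 + x" using P1 cube_poly_P by simp
  show "cube_poly_eval 2 x = 3 + 2 * x" using P2 cube_poly_P by simp
  show "cube_poly_eval 3 x = 4 + 3 * x" using P3 cube_poly_P by simp
  show "cube_poly_eval n x = cube_poly_eval (n - 1) x + (1 + x) * cube_poly_eval (n - 2) x"
    if "4 \<le> n" for n using P_rec[OF that] cube_poly_P by simp
qed

end
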